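(* Let $k$ be a positive integer and let $p>k(k+1)$ be a positive integer. Then for every integer $n$ there is an integer $m$ with $\mathbf r_k\!\left(\tfrac{n}{k+1}\right)=\mathbf r_k\!\left(\tfrac{m}{p}\right)$; that is, $\mathbf r_k\!\left(\tfrac1{k+1}\mathbb{Z}\right)\subseteq\mathbf r_k\!\left(\tfrac1p\mathbb{Z}\right)$.
   Context: For $x\in\mathbb{R}$, $\{x\}=x-\lfloor x\rfloor$ is the fractional part, and for $t\in\mathbb{R}$, $\mathbf r_k(t):=\big(\lfloor (k+1)\{t\}\rfloor,\lfloor (k+1)\{2t\}\rfloor,\ldots,\lfloor (k+1)\{kt\}\rfloor\big)\in\{0,\ldots,k\}^k$. *)

theory Defs
  imports Complex_Main
begin

text \<open>The vector
  r_k(t) = (floor((k+1){t}), ..., floor((k+1){kt})) is represented as the list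
  of its k entries, the j-th entry (j = 1..k) being floor((k+1) * frac(j*t)).\<close>

definition r_vec :: "nat \<Rightarrow> real \<Rightarrow> int list" where
  "r_vec k t = map (\<lambda>j. \<lfloor>real (k + 1) * frac (real j * t)\<rfloor>) [1..<k+1]"

end

theory Submission
  imports Defs
begin

lemma key:
  fixes d :: nat and c :: int and y :: real
  assumes d: "d > 0" and l: "real_of_int c / real d \<le> y" and u: "y < (real_of_int c + 1) / real d"
  shows "\<lfloor>real d * frac y\<rfloor> = c mod int d"
proof -
  define q where "q = c div int d"
  define r where "r = c mod int d"
  have cq: "c = q * int d + r" unfolding q_def r_def by simp
  have r0: "0 \<le> r" and r1: "r + 1 \<le> int d" using d unfolding r_def
    by (simp_all add: pos_mod_sign) (smt (verit) of_nat_0_less_iff pos_mod_bound)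
  have dp: "real d > 0" using d by simp
  have ly: "real d * y \<ge> real_of_int c" using l dp by (simp add: field_simps)
  have uy: "real d * y < real_of_int c + 1" using u dp by (simp add: field_simps)
  have rc: "real_of_int c = real_of_int q * real d + real_of_int r" using cq by simp
  have r0': "real_of_int r \<ge> 0" using r0 by simp
  have r1': "real_of_int r + 1 \<le> real d" using r1 by linarith
  have "real_of_int q \<le> y"
  proof -
    have "real d * real_of_int q \<le> real d * y" using ly rc r0' by (simp add: algebra_simps)
    thus ?thesis using dp by simp
  qed
  moreover have "y < real_of_int q + 1"
  proof -
    have "real d * y < real d * (real_of_int q + 1)" using uy rc r1' by (simp add: algebra_simps)
    thus ?thesis using dp by simp
  qed
  ultimately have fy: "\<lfloor>y\<rfloor> = q" by (simp add: floor_eq_iff)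
  have fr: "frac y = y - real_of_int q" using fy by (simp add: frac_def)
  have e: "real d * frac y = real d * y - real_of_int q * real d" unfolding fr by (simp add: algebra_simps)
  have "\<lfloor>real d * frac y\<rfloor> = r"
    unfolding e floor_eq_iff using ly uy rc by linarith
  thus ?thesis unfolding r_def .
qed

lemma key0:
  fixes d :: nat and c :: int
  assumes d: "d > 0"
  shows "\<lfloor>real d * frac (real_of_int c / real d)\<rfloor> = c mod int d"
  using key[OF d, of c "real_of_int c / real d"] d by (simp add: divide_strict_right_mono)

theorem mainTheorem11:
  fixes k p :: nat
  assumes "k \<ge> 1" and "p > k * (k + 1)"
  shows "\<forall>n::int. \<exists>m::int. r_vec k (real_of_int n / real (k + 1)) = r_vec k (real_of_int m / real p)"
proof
  fix n :: int
  define m where "m = \<lceil>real_of_int n * real p / real (k + 1)\<rceil>"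
  have pp: "real p > 0" using assms by simp
  have kk: "real k * (real k + 1) < real p" using assms(2)
    by (metis of_nat_1 of_nat_add of_nat_less_iff of_nat_mult)
  have k1: "real k \<ge> 1" using assms(1) by simp
  have m1: "real_of_int m \<ge> real_of_int n * real p / real (k + 1)" unfolding m_def by simp
  have m2: "real_of_int m < real_of_int n * real p / real (k + 1) + 1" unfolding m_def by linarith
  have lo: "real_of_int n / real (k+1) \<le> real_of_int m / real p"
    using m1 pp by (simp add: field_simps)
  have hi: "real k * (real_of_int m / real p - real_of_int n / real (k+1)) < 1 / real (k+1)"
  proof -
    have "real_of_int m / real p - real_of_int n / real (k+1) < 1 / real p"
    proof -
      have "real_of_int m / real p < (real_of_int n * real p / real (k + 1) + 1) / real p"
        using m2 pp by (simp add: divide_strict_right_mono)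
      also have "\<dots> = real_of_int n / real (k+1) + 1 / real p"
        using pp by (simp add: add_divide_distrib)
      finally show ?thesis by simp
    qed
    moreover have "real k * (1 / real p) < 1 / real (k+1)"
      using kk pp k1 by (simp add: field_simps)
    ultimately show ?thesis using k1
      by (smt (verit) mult_strict_left_mono)
  qed
  have "map (\<lambda>j. \<lfloor>real (k + 1) * frac (real j * (real_of_int n / real (k + 1)))\<rfloor>) [1..<k+1]
      = map (\<lambda>j. \<lfloor>real (k + 1) * frac (real j * (real_of_int m / real p))\<rfloor>) [1..<k+1]"
  proof (rule map_cong[OF refl])
    fix j assume "j \<in> set [1..<k+1]"
    hence j1: "1 \<le> j" "j \<le> k" by auto
    define c where "c = int j * n"
    have ce: "real j * (real_of_int n / real (k + 1)) = real_of_int c / real (k+1)"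
      unfolding c_def by simp
    have l: "real_of_int c / real (k+1) \<le> real j * (real_of_int m / real p)"
      unfolding ce[symmetric] by (rule mult_left_mono[OF lo]) simp
    have "real j * (real_of_int m / real p - real_of_int n / real (k+1))
          \<le> real k * (real_of_int m / real p - real_of_int n / real (k+1))"
      using lo j1 by (simp add: mult_right_mono)
    hence "real j * (real_of_int m / real p) - real_of_int c / real (k+1) < 1 / real (k+1)"
      using hi ce by (simp add: algebra_simps)
    hence u: "real j * (real_of_int m / real p) < (real_of_int c + 1) / real (k+1)"
      by (simp add: add_divide_distrib)
    show "\<lfloor>real (k + 1) * frac (real j * (real_of_int n / real (k + 1)))\<rfloor>
        = \<lfloor>real (k + 1) * frac (real j * (real_of_int m / real p))\<rfloor>"
    proof -
      have A: "\<lfloor>real (k + 1) * frac (real_of_int c / real (k + 1))\<rfloor> = c mod int (k+1)"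
        by (rule key0) simp
      have B: "\<lfloor>real (k + 1) * frac (real j * (real_of_int m / real p))\<rfloor> = c mod int (k+1)"
        by (rule key[OF _ l u]) simp
      show ?thesis unfolding ce A B ..
    qed
  qed
  thus "\<exists>m::int. r_vec k (real_of_int n / real (k + 1)) = r_vec k (real_of_int m / real p)"
    unfolding r_vec_def by blast
qed

end
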